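(* Let $d\ge 2$ and let $\mathcal A$ be the space of closed curves with constant speed parametrization defined below, equipped with the Riemannian metric $\langle v,w\rangle_{T_\eta\mathcal A}=L(\eta)\int_0^1 v(s)\cdot w(s)\,ds$. Then the associated Riemannian distance $d_{\mathcal A}$ is non-degenerate: for all $\eta_0,\eta_1\in\mathcal A$ with $\eta_0\neq\eta_1$ one has $d_{\mathcal A}(\eta_0,\eta_1)>0$.
   Context: $\mathbb S^1=\mathbb R/\mathbb Z$. $\mathcal K=\{\eta\in H^2(\mathbb S^1;\mathbb R^d):\int_0^1\eta(s)\,ds=0\}$, $L(\eta)=\int_0^1|\partial_s\eta|\,ds$, and $\mathcal A=\{\eta\in\mathcal K: |\partial_s\eta(s)|=L(\eta)>0\ \text{for all } s\in\mathbb S^1\}$, a smooth Hilbert submanifold of $\mathcal K$. For a $C^1$ path $\eta:[0,1]\to\mathcal A$ its Riemannian length is $\int_0^1\|\dot\eta(t)\|_{L^2(\mathbb S^1)}\sqrt{L(\eta(t))}\,dt$, and $d_{\mathcal A}(\eta_0,\eta_1)$ is the infimum of the lengths of such paths with $\eta(0)=\eta_0$, $\eta(1)=\eta_1$. *)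

theory Defs
  imports "HOL-Analysis.Analysis"
begin

text \<open>Curves on S^1 = R/Z are represented as 1-periodic functions
  real => real^'d (the continuous representative of an H^2 class).\<close>

type_synonym 'd curve = "real \<Rightarrow> real^'d"

definition periodic1 :: "('d::finite) curve \<Rightarrow> bool" where
  "periodic1 \<eta> \<longleftrightarrow> (\<forall>s. \<eta> (s + 1) = \<eta> s)"

definition weak_second_deriv :: "('d::finite) curve \<Rightarrow> 'd curve \<Rightarrow> bool" where
  "weak_second_deriv \<eta> g \<longleftrightarrow>
     (\<forall>s. \<eta> differentiable (at s)) \<and>
     (\<forall>a b. g absolutely_integrable_on {a..b} \<and>
        (a \<le> b \<longrightarrow> (g has_integral
            (vector_derivative \<eta> (at b) - vector_derivative \<eta> (at a))) {a..b}))"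

definition in_H2 :: "('d::finite) curve \<Rightarrow> bool" where
  "in_H2 \<eta> \<longleftrightarrow> periodic1 \<eta> \<and>
     (\<exists>g. weak_second_deriv \<eta> g \<and> (\<lambda>s. (norm (g s))\<^sup>2) integrable_on {0..1})"

text \<open>H^2 norm (well defined since the weak second derivative is unique a.e.)\<close>
definition H2_norm :: "('d::finite) curve \<Rightarrow> real" where
  "H2_norm \<eta> = sqrt (integral {0..1} (\<lambda>s. (norm (\<eta> s))\<^sup>2
       + (norm (vector_derivative \<eta> (at s)))\<^sup>2
       + (norm ((SOME g. weak_second_deriv \<eta> g) s))\<^sup>2))"

definition L2_norm :: "('d::finite) curve \<Rightarrow> real" where
  "L2_norm v = sqrt (integral {0..1} (\<lambda>s. (norm (v s))\<^sup>2))"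

definition in_K :: "('d::finite) curve \<Rightarrow> bool" where
  "in_K \<eta> \<longleftrightarrow> in_H2 \<eta> \<and> integral {0..1} \<eta> = 0"

definition curve_length :: "('d::finite) curve \<Rightarrow> real" where
  "curve_length \<eta> = integral {0..1} (\<lambda>s. norm (vector_derivative \<eta> (at s)))"

definition in_A :: "('d::finite) curve \<Rightarrow> bool" where
  "in_A \<eta> \<longleftrightarrow> in_K \<eta> \<and> curve_length \<eta> > 0 \<and>
     (\<forall>s. norm (vector_derivative \<eta> (at s)) = curve_length \<eta>)"

definition C1_path_A :: "(real \<Rightarrow> ('d::finite) curve) \<Rightarrow> (real \<Rightarrow> 'd curve) \<Rightarrow> bool" where
  "C1_path_A \<gamma> \<gamma>' \<longleftrightarrow>
     (\<forall>t\<in>{0..1}. in_A (\<gamma> t) \<and> in_H2 (\<gamma>' t)) \<and>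
     (\<forall>t\<in>{0..1}. ((\<lambda>h. H2_norm (\<lambda>s. (1 / h) *\<^sub>R (\<gamma> (t + h) s - \<gamma> t s) - \<gamma>' t s))
                   \<longlongrightarrow> 0) (at 0 within {h. t + h \<in> {0..1}})) \<and>
     (\<forall>t\<in>{0..1}. ((\<lambda>u. H2_norm (\<lambda>s. \<gamma>' u s - \<gamma>' t s)) \<longlongrightarrow> 0) (at t within {0..1}))"

definition riem_length :: "(real \<Rightarrow> ('d::finite) curve) \<Rightarrow> (real \<Rightarrow> 'd curve) \<Rightarrow> real" where
  "riem_length \<gamma> \<gamma>' = integral {0..1} (\<lambda>t. L2_norm (\<gamma>' t) * sqrt (curve_length (\<gamma> t)))"

text \<open>Riemannian distance, as an extended real (infimum over the empty set is +infinity).\<close>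
definition dist_A :: "('d::finite) curve \<Rightarrow> 'd curve \<Rightarrow> ereal" where
  "dist_A \<eta>0 \<eta>1 = (INF p \<in> {(\<gamma>, \<gamma>'). C1_path_A \<gamma> \<gamma>' \<and> \<gamma> 0 = \<eta>0 \<and> \<gamma> 1 = \<eta>1}.
                      ereal (riem_length (fst p) (snd p)))"

end

theory Submission
  imports Defs
begin


lemma zero_intervals_norm0:
  fixes h :: "real \<Rightarrow> 'a::euclidean_space"
  assumes h: "h absolutely_integrable_on {0..1}" and z: "\<And>a b. integral {a..b} h = 0"
  shows "integral {0..1} (\<lambda>x. norm (h x)) = 0"
proof -
  have hi: "h integrable_on cbox 0 1" and ni: "(\<lambda>x. norm (h x)) integrable_on {0..1}"
    using h absolutely_integrable_on_def by auto
  have nonneg: "integral {0..1} (\<lambda>x. norm (h x)) \<ge> 0"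
    by (rule integral_nonneg[OF ni]) auto
  have lt: "integral {0..1} (\<lambda>x. norm (h x)) < 2*e" if e: "e > 0" for e
  proof -
    obtain \<gamma>1 where g1: "gauge \<gamma>1" and H: "\<And>p. p tagged_partial_division_of (cbox 0 1) \<Longrightarrow> \<gamma>1 fine p \<Longrightarrow>
       (\<Sum>(x,k)\<in>p. norm (Henstock_Kurzweil_Integration.content k *\<^sub>R h x - integral k h)) < e"
      using Henstock_lemma[OF hi e] by blast
    have X: "\<forall>e>0. \<exists>\<gamma>. gauge \<gamma> \<and> (\<forall>D. D tagged_division_of {0..1} \<and> \<gamma> fine D \<longrightarrow>
       norm ((\<Sum>(x,k)\<in>D. Henstock_Kurzweil_Integration.content k *\<^sub>R norm (h x)) - integral {0..1} (\<lambda>x. norm (h x))) < e)"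
      using integrable_integral[OF ni] unfolding has_integral_real .
    from X[rule_format, OF e] obtain \<gamma>2 where g2: "gauge \<gamma>2" and R: "\<forall>D. D tagged_division_of {0..1} \<and> \<gamma>2 fine D \<longrightarrow>
       norm ((\<Sum>(x,k)\<in>D. Henstock_Kurzweil_Integration.content k *\<^sub>R norm (h x)) - integral {0..1} (\<lambda>x. norm (h x))) < e"
      by (elim exE conjE)
    obtain D where D: "D tagged_division_of cbox 0 1" "(\<lambda>x. \<gamma>1 x \<inter> \<gamma>2 x) fine D"
      using fine_division_exists[OF gauge_Int[OF g1 g2]] by blast
    have f1: "\<gamma>1 fine D" and f2: "\<gamma>2 fine D" using D(2) unfolding fine_Int by auto
    have Dp: "D tagged_partial_division_of cbox 0 1" using D(1) tagged_division_of_def by blast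
    have "(\<Sum>(x,k)\<in>D. norm (Henstock_Kurzweil_Integration.content k *\<^sub>R h x - integral k h)) = (\<Sum>(x,k)\<in>D. Henstock_Kurzweil_Integration.content k *\<^sub>R norm (h x))"
    proof (rule sum.cong[OF refl])
      fix xk assume xk: "xk \<in> D"
      obtain x k where xkd: "xk = (x,k)" by fastforce
      obtain a b where k: "k = cbox a b" using tagged_division_ofD(4)[OF D(1)] xk xkd by blast
      have "integral k h = 0" using z[of a b] k by simp
      moreover have "Henstock_Kurzweil_Integration.content k \<ge> 0" by simp
      ultimately show "(case xk of (x, k) \<Rightarrow> norm (Henstock_Kurzweil_Integration.content k *\<^sub>R h x - integral k h)) = (case xk of (x, k) \<Rightarrow> Henstock_Kurzweil_Integration.content k *\<^sub>R norm (h x))"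
        using xkd by simp
    qed
    then have "(\<Sum>(x,k)\<in>D. Henstock_Kurzweil_Integration.content k *\<^sub>R norm (h x)) < e" using H[OF Dp f1] by simp
    moreover have "norm ((\<Sum>(x,k)\<in>D. Henstock_Kurzweil_Integration.content k *\<^sub>R norm (h x)) - integral {0..1} (\<lambda>x. norm (h x))) < e"
      using R D(1) f2 by simp
    ultimately show ?thesis by simp
  qed
  show ?thesis
  proof (rule ccontr)
    assume "integral {0..1} (\<lambda>x. norm (h x)) \<noteq> 0"
    then have p: "integral {0..1} (\<lambda>x. norm (h x)) > 0" using nonneg by simp
    from lt[of "integral {0..1} (\<lambda>x. norm (h x)) / 4"] p show False by simp
  qed
qed

lemma meas_nz: "f \<in> borel_measurable M \<Longrightarrow> {x\<in>space M. (f x::'a::euclidean_space) \<noteq> 0} \<in> sets M"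
  by simp

lemma norm0_negligible:
  fixes h :: "real \<Rightarrow> 'a::euclidean_space"
  assumes h: "h absolutely_integrable_on S" and S: "S \<in> sets lebesgue"
    and z: "integral S (\<lambda>x. norm (h x)) = 0"
  shows "negligible {x\<in>S. h x \<noteq> 0}"
proof -
  let ?k = "\<lambda>x. indicator S x *\<^sub>R h x"
  have ki: "integrable lebesgue ?k" using h set_integrable_def by blast
  have "(\<integral>x. norm (?k x) \<partial>lebesgue) = (LINT x:S|lebesgue. norm (h x))"
    unfolding set_lebesgue_integral_def by (intro Bochner_Integration.integral_cong) (auto simp: indicator_def)
  also have "\<dots> = integral S (\<lambda>x. norm (h x))"
    using set_lebesgue_integral_eq_integral(2)[OF set_integrable_norm[OF h]] .
  finally have "emeasure lebesgue {x\<in>space lebesgue. ?k x \<noteq> 0} = 0"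
    using integral_norm_eq_0_iff[OF ki] z by simp
  moreover have "{x\<in>space lebesgue. ?k x \<noteq> 0} = {x\<in>S. h x \<noteq> 0}"
    by (auto simp: indicator_def)
  moreover have "{x\<in>space lebesgue. ?k x \<noteq> 0} \<in> sets lebesgue"
    by (rule meas_nz[OF borel_measurable_integrable[OF ki]])
  ultimately show ?thesis
    by (simp add: negligible_iff_null_sets null_sets_def)
qed



lemma cs_alg:
  fixes A B C :: real
  assumes "\<And>t. 0 \<le> A - 2*t*C + t\<^sup>2*B" "B \<ge> 0"
  shows "C\<^sup>2 \<le> A*B"
proof (cases "B = 0")
  case True
  show ?thesis
  proof (rule ccontr)
    assume "\<not> ?thesis"
    then have "C \<noteq> 0" using True by simp
    have "0 \<le> A - 2*((A+1)/(2*C))*C" using assms(1)[of "(A+1)/(2*C)"] True by simp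
    also have "\<dots> = -1" using \<open>C \<noteq> 0\<close> by (simp add: field_simps)
    finally show False by simp
  qed
next
  case False
  then have Bp: "B > 0" using assms(2) by simp
  have "0 \<le> A - 2*(C/B)*C + (C/B)\<^sup>2*B" using assms(1) .
  also have "\<dots> = A - C\<^sup>2/B" using Bp by (simp add: field_simps power2_eq_square)
  finally have "C\<^sup>2/B \<le> A" by simp
  then show ?thesis using Bp by (simp add: field_simps)
qed

lemma integrable_cmult_real: "(f::real\<Rightarrow>real) integrable_on S \<Longrightarrow> (\<lambda>x. c * f x) integrable_on S"
  using integrable_cmul[of f S c] by simp

lemma cauchy_schwarz_int:
  fixes f g :: "real \<Rightarrow> real"
  assumes f2: "(\<lambda>x. (f x)\<^sup>2) integrable_on S" and g2: "(\<lambda>x. (g x)\<^sup>2) integrable_on S"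
    and fg: "(\<lambda>x. f x * g x) integrable_on S"
  shows "(integral S (\<lambda>x. f x * g x))\<^sup>2 \<le> integral S (\<lambda>x. (f x)\<^sup>2) * integral S (\<lambda>x. (g x)\<^sup>2)"
proof (rule cs_alg)
  fix t :: real
  have i1: "(\<lambda>x. (f x)\<^sup>2 - (2*t) * (f x * g x)) integrable_on S"
    using f2 fg by (intro integrable_diff integrable_cmult_real) auto
  have i2: "(\<lambda>x. t\<^sup>2 * (g x)\<^sup>2) integrable_on S"
    using g2 by (intro integrable_cmult_real) auto
  have i3: "(\<lambda>x. ((f x)\<^sup>2 - (2*t) * (f x * g x)) + t\<^sup>2 * (g x)\<^sup>2) integrable_on S"
    by (rule integrable_add[OF i1 i2])
  have pw: "((f x)\<^sup>2 - (2*t) * (f x * g x)) + t\<^sup>2 * (g x)\<^sup>2 = (f x - t * g x)\<^sup>2" for x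
    by (simp add: power2_eq_square algebra_simps)
  have "0 \<le> integral S (\<lambda>x. ((f x)\<^sup>2 - (2*t) * (f x * g x)) + t\<^sup>2 * (g x)\<^sup>2)"
    by (rule integral_nonneg[OF i3]) (simp only: pw zero_le_power2)
  also have "\<dots> = integral S (\<lambda>x. (f x)\<^sup>2 - (2*t) * (f x * g x)) + integral S (\<lambda>x. t\<^sup>2 * (g x)\<^sup>2)"
    by (rule Henstock_Kurzweil_Integration.integral_add[OF i1 i2])
  also have "integral S (\<lambda>x. (f x)\<^sup>2 - (2*t) * (f x * g x)) = integral S (\<lambda>x. (f x)\<^sup>2) - integral S (\<lambda>x. (2*t) * (f x * g x))"
    by (rule Henstock_Kurzweil_Integration.integral_diff[OF f2 integrable_cmult_real[OF fg]])
  also have "integral S (\<lambda>x. (2*t) * (f x * g x)) = 2*t*integral S (\<lambda>x. f x * g x)"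
    by (rule integral_mult[symmetric, OF fg])
  also have "integral S (\<lambda>x. t\<^sup>2 * (g x)\<^sup>2) = t\<^sup>2 * integral S (\<lambda>x. (g x)\<^sup>2)"
    by (rule integral_mult[symmetric, OF g2])
  finally show "0 \<le> integral S (\<lambda>x. (f x)\<^sup>2) - 2*t*integral S (\<lambda>x. f x * g x) + t\<^sup>2 * integral S (\<lambda>x. (g x)\<^sup>2)" .
next
  show "0 \<le> integral S (\<lambda>x. (g x)\<^sup>2)" by (rule integral_nonneg[OF g2]) auto
qed

lemma cs_cont:
  fixes a :: "real \<Rightarrow> 'a::euclidean_space" and b :: "real \<Rightarrow> 'b::euclidean_space"
  assumes "continuous_on {0..1} a" "continuous_on {0..1} b"
  shows "integral {0..1} (\<lambda>s. norm (a s) * norm (b s))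
          \<le> sqrt (integral {0..1} (\<lambda>s. (norm (a s))\<^sup>2)) * sqrt (integral {0..1} (\<lambda>s. (norm (b s))\<^sup>2))"
proof -
  have ca: "continuous_on {0..1} (\<lambda>s. norm (a s))" and cb: "continuous_on {0..1} (\<lambda>s. norm (b s))"
    using assms by (auto intro: continuous_on_norm)
  have i1: "(\<lambda>s. (norm (a s))\<^sup>2) integrable_on {0..1}"
    by (rule integrable_continuous_interval) (intro continuous_intros ca)
  have i2: "(\<lambda>s. (norm (b s))\<^sup>2) integrable_on {0..1}"
    by (rule integrable_continuous_interval) (intro continuous_intros cb)
  have i3: "(\<lambda>s. norm (a s) * norm (b s)) integrable_on {0..1}"
    by (rule integrable_continuous_interval) (intro continuous_intros ca cb)
  have nn: "0 \<le> integral {0..1} (\<lambda>s. norm (a s) * norm (b s))"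
    by (rule integral_nonneg[OF i3]) auto
  have "(integral {0..1} (\<lambda>s. norm (a s) * norm (b s)))\<^sup>2 \<le> integral {0..1} (\<lambda>s. (norm (a s))\<^sup>2) * integral {0..1} (\<lambda>s. (norm (b s))\<^sup>2)"
    by (rule cauchy_schwarz_int[OF i1 i2 i3])
  then have "integral {0..1} (\<lambda>s. norm (a s) * norm (b s)) \<le> sqrt (integral {0..1} (\<lambda>s. (norm (a s))\<^sup>2) * integral {0..1} (\<lambda>s. (norm (b s))\<^sup>2))"
    using nn real_le_rsqrt by blast
  then show ?thesis by (simp add: real_sqrt_mult)
qed

lemma l1_le_l2:
  fixes a :: "real \<Rightarrow> 'a::euclidean_space"
  assumes "continuous_on {0..1} a"
  shows "integral {0..1} (\<lambda>s. norm (a s)) \<le> sqrt (integral {0..1} (\<lambda>s. (norm (a s))\<^sup>2))"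
  using cs_cont[OF assms, of "\<lambda>s. 1::real"] by simp



abbreviation vd :: "('d::finite) curve \<Rightarrow> real \<Rightarrow> real^'d" where
  "vd v s \<equiv> vector_derivative v (at s)"

definition Hp :: "('d::finite) curve \<Rightarrow> bool" where
  "Hp v \<longleftrightarrow> (\<exists>g. weak_second_deriv v g \<and> (\<lambda>s. (norm (g s))\<^sup>2) integrable_on {0..1})"

lemma wsd_cont: assumes "weak_second_deriv v g" shows "continuous_on S v"
proof -
  have "\<And>x. v differentiable at x" using assms unfolding weak_second_deriv_def by blast
  then show ?thesis by (intro differentiable_imp_continuous_on differentiable_at_imp_differentiable_on) auto
qed

lemma wsd_dcont: assumes "weak_second_deriv v g" shows "continuous_on {a..b} (vd v)"
proof (cases "a \<le> b")
  case True
  have gi: "g integrable_on {a..b}" using assms unfolding weak_second_deriv_def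
    using set_lebesgue_integral_eq_integral(1) by blast
  have eq: "vd v a + integral {a..x} g = vd v x" if "x \<in> {a..b}" for x
  proof -
    have "(g has_integral (vd v x - vd v a)) {a..x}" using assms that unfolding weak_second_deriv_def by auto
    then show ?thesis by (simp add: integral_unique)
  qed
  have "continuous_on {a..b} (\<lambda>x. vd v a + integral {a..x} g)"
    by (intro continuous_intros indefinite_integral_continuous_1 gi)
  then show ?thesis by (rule continuous_on_eq) (rule eq)
next
  case False
  then show ?thesis by simp
qed

lemma wsd_unique:
  assumes g1: "weak_second_deriv v g1" and g2: "weak_second_deriv v g2"
  shows "negligible {x\<in>{0..1}. g1 x \<noteq> g2 x}"
proof -
  let ?h = "\<lambda>x. g1 x - g2 x"
  have hi: "?h absolutely_integrable_on {0..1}"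
    using g1 g2 unfolding weak_second_deriv_def by (intro set_integral_diff(1)) auto
  have z: "integral {a..b} ?h = 0" for a b
  proof (cases "a \<le> b")
    case True
    have "(?h has_integral ((vd v b - vd v a) - (vd v b - vd v a))) {a..b}"
      using g1 g2 True unfolding weak_second_deriv_def by (intro has_integral_diff) auto
    then show ?thesis by (simp add: integral_unique)
  next
    case False
    then show ?thesis by simp
  qed
  have "integral {0..1} (\<lambda>x. norm (?h x)) = 0" by (rule zero_intervals_norm0[OF hi z])
  then have "negligible {x\<in>{0..1}. ?h x \<noteq> 0}" by (rule norm0_negligible[OF hi, rotated]) simp
  then show ?thesis by simp
qed

lemma Hp_wsd: "Hp v \<Longrightarrow> \<exists>g. weak_second_deriv v g" unfolding Hp_def by blast

lemma Hp_cont: "Hp v \<Longrightarrow> continuous_on S v" using Hp_wsd wsd_cont by blast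
lemma Hp_dcont: "Hp v \<Longrightarrow> continuous_on {a..b} (vd v)" using Hp_wsd wsd_dcont by blast
lemma Hp_diffble: "Hp v \<Longrightarrow> v differentiable at s" using Hp_wsd unfolding weak_second_deriv_def by blast

lemma Hp_integrand:
  assumes "Hp v"
  shows "(\<lambda>s. (norm (v s))\<^sup>2 + (norm (vd v s))\<^sup>2 + (norm ((SOME g. weak_second_deriv v g) s))\<^sup>2) integrable_on {0..1}"
proof -
  obtain g0 where g0: "weak_second_deriv v g0" "(\<lambda>s. (norm (g0 s))\<^sup>2) integrable_on {0..1}"
    using assms Hp_def by blast
  define g1 where "g1 = (SOME g. weak_second_deriv v g)"
  have g1: "weak_second_deriv v g1" unfolding g1_def by (rule someI[where P="weak_second_deriv v", OF g0(1)])
  have N: "negligible {x\<in>{0..1}. g1 x \<noteq> g0 x}" by (rule wsd_unique[OF g1 g0(1)])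
  have "(\<lambda>s. (norm (g1 s))\<^sup>2) integrable_on {0..1}"
    by (rule integrable_spike[OF g0(2) N]) auto
  moreover have "(\<lambda>s. (norm (v s))\<^sup>2) integrable_on {0..1}"
    by (rule integrable_continuous_interval) (intro continuous_intros Hp_cont[OF assms])
  moreover have "(\<lambda>s. (norm (vd v s))\<^sup>2) integrable_on {0..1}"
    by (rule integrable_continuous_interval) (intro continuous_intros Hp_dcont[OF assms])
  ultimately show ?thesis unfolding g1_def by (intro integrable_add)
qed

lemma Hp_sq_bounds:
  assumes "Hp v"
  shows "integral {0..1} (\<lambda>s. (norm (v s))\<^sup>2) \<le> (H2_norm v)\<^sup>2"
    and "integral {0..1} (\<lambda>s. (norm (vd v s))\<^sup>2) \<le> (H2_norm v)\<^sup>2"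
proof -
  let ?I = "\<lambda>s. (norm (v s))\<^sup>2 + (norm (vd v s))\<^sup>2 + (norm ((SOME g. weak_second_deriv v g) s))\<^sup>2"
  have Ii: "?I integrable_on {0..1}" by (rule Hp_integrand[OF assms])
  have nn: "0 \<le> integral {0..1} ?I" by (rule integral_nonneg[OF Ii]) auto
  have H: "(H2_norm v)\<^sup>2 = integral {0..1} ?I" unfolding H2_norm_def by (rule real_sqrt_pow2[OF nn])
  have i1: "(\<lambda>s. (norm (v s))\<^sup>2) integrable_on {0..1}"
    by (rule integrable_continuous_interval) (intro continuous_intros Hp_cont[OF assms])
  have i2: "(\<lambda>s. (norm (vd v s))\<^sup>2) integrable_on {0..1}"
    by (rule integrable_continuous_interval) (intro continuous_intros Hp_dcont[OF assms])
  show "integral {0..1} (\<lambda>s. (norm (v s))\<^sup>2) \<le> (H2_norm v)\<^sup>2"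
    unfolding H by (rule integral_le[OF i1 Ii]) auto
  show "integral {0..1} (\<lambda>s. (norm (vd v s))\<^sup>2) \<le> (H2_norm v)\<^sup>2"
    unfolding H by (rule integral_le[OF i2 Ii]) auto
qed

lemma integral_nonneg_any:
  fixes f :: "'a::euclidean_space \<Rightarrow> real"
  assumes "\<And>x. x \<in> S \<Longrightarrow> 0 \<le> f x" shows "0 \<le> integral S f"
proof (cases "f integrable_on S")
  case True then show ?thesis using integral_nonneg assms by blast
next
  case False then show ?thesis by (simp add: not_integrable_integral)
qed

lemma H2_norm_nonneg: "H2_norm v \<ge> 0" unfolding H2_norm_def
  by (intro real_sqrt_ge_zero integral_nonneg_any add_nonneg_nonneg zero_le_power2)

lemma Hp_L1:
  assumes "Hp v"
  shows "integral {0..1} (\<lambda>s. norm (v s)) \<le> H2_norm v"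
    and "integral {0..1} (\<lambda>s. norm (vd v s)) \<le> H2_norm v"
    and "L2_norm v \<le> H2_norm v"
proof -
  have a: "sqrt (integral {0..1} (\<lambda>s. (norm (v s))\<^sup>2)) \<le> H2_norm v"
    using real_sqrt_le_mono[OF Hp_sq_bounds(1)[OF assms]] by (simp add: abs_of_nonneg[OF H2_norm_nonneg])
  have b: "sqrt (integral {0..1} (\<lambda>s. (norm (vd v s))\<^sup>2)) \<le> H2_norm v"
    using real_sqrt_le_mono[OF Hp_sq_bounds(2)[OF assms]] by (simp add: abs_of_nonneg[OF H2_norm_nonneg])
  show "integral {0..1} (\<lambda>s. norm (v s)) \<le> H2_norm v"
    using l1_le_l2[OF Hp_cont[OF assms]] a by linarith
  show "integral {0..1} (\<lambda>s. norm (vd v s)) \<le> H2_norm v"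
    using l1_le_l2[OF Hp_dcont[OF assms]] b by linarith
  show "L2_norm v \<le> H2_norm v" unfolding L2_norm_def using a .
qed

lemma wsd_diff:
  assumes a: "weak_second_deriv a ga" and b: "weak_second_deriv b gb"
  shows "weak_second_deriv (\<lambda>s. a s - b s) (\<lambda>s. ga s - gb s)"
  unfolding weak_second_deriv_def
proof (intro conjI allI impI)
  fix s show "(\<lambda>s. a s - b s) differentiable at s"
    using a b unfolding weak_second_deriv_def by (intro differentiable_diff) auto
next
  fix x y show "(\<lambda>s. ga s - gb s) absolutely_integrable_on {x..y}"
    using a b unfolding weak_second_deriv_def by (intro set_integral_diff(1)) auto
next
  fix x y :: real assume xy: "x \<le> y"
  have da: "a differentiable at s" and db: "b differentiable at s" for s
    using a b unfolding weak_second_deriv_def by auto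
  have "((\<lambda>s. ga s - gb s) has_integral ((vd a y - vd a x) - (vd b y - vd b x))) {x..y}"
    using a b xy unfolding weak_second_deriv_def by (intro has_integral_diff) auto
  then show "((\<lambda>s. ga s - gb s) has_integral (vd (\<lambda>s. a s - b s) y - vd (\<lambda>s. a s - b s) x)) {x..y}"
    using da db by (simp add: algebra_simps)
qed

lemma vd_scale: "a differentiable at x \<Longrightarrow> vd (\<lambda>s. c *\<^sub>R a s) x = c *\<^sub>R vd a x"
  using vector_derivative_scaleR_at[of "\<lambda>s. c" x a] by simp

lemma wsd_scale:
  assumes a: "weak_second_deriv a ga"
  shows "weak_second_deriv (\<lambda>s. c *\<^sub>R a s) (\<lambda>s. c *\<^sub>R ga s)"
  unfolding weak_second_deriv_def
proof (intro conjI allI impI)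
  fix s show "(\<lambda>s. c *\<^sub>R a s) differentiable at s"
    using a unfolding weak_second_deriv_def by (intro differentiable_scaleR) auto
next
  fix x y show "(\<lambda>s. c *\<^sub>R ga s) absolutely_integrable_on {x..y}"
    using a unfolding weak_second_deriv_def by (intro absolutely_integrable_scaleR_left) auto
next
  fix x y :: real assume xy: "x \<le> y"
  have da: "a differentiable at s" for s
    using a unfolding weak_second_deriv_def by auto
  have "((\<lambda>s. c *\<^sub>R ga s) has_integral (c *\<^sub>R (vd a y - vd a x))) {x..y}"
    using a xy unfolding weak_second_deriv_def by (intro has_integral_cmul) auto
  then show "((\<lambda>s. c *\<^sub>R ga s) has_integral (vd (\<lambda>s. c *\<^sub>R a s) y - vd (\<lambda>s. c *\<^sub>R a s) x)) {x..y}"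
    using da by (simp add: vd_scale algebra_simps)
qed



lemma sq_int_diff:
  fixes ga gb :: "real \<Rightarrow> real^'d::finite"
  assumes a1: "ga absolutely_integrable_on {0..1}" and b1: "gb absolutely_integrable_on {0..1}"
    and a2: "(\<lambda>s. (norm (ga s))\<^sup>2) integrable_on {0..1}" and b2: "(\<lambda>s. (norm (gb s))\<^sup>2) integrable_on {0..1}"
  shows "(\<lambda>s. (norm (ga s - gb s))\<^sup>2) integrable_on {0..1}"
proof (rule measurable_bounded_by_integrable_imp_integrable_real)
  have ma: "ga \<in> borel_measurable (lebesgue_on {0..1})"
    using a1 absolutely_integrable_measurable[of "{0..1::real}" ga] by simp
  have mb: "gb \<in> borel_measurable (lebesgue_on {0..1})"
    using b1 absolutely_integrable_measurable[of "{0..1::real}" gb] by simp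
  show "(\<lambda>s. (norm (ga s - gb s))\<^sup>2) \<in> borel_measurable (lebesgue_on {0..1})"
    using borel_measurable_continuous_on[where f="\<lambda>x::real^'d. (norm x)\<^sup>2", OF _ borel_measurable_diff[OF ma mb]]
    by (simp add: continuous_intros)
  show "(\<lambda>s. 2 * (norm (ga s))\<^sup>2 + 2 * (norm (gb s))\<^sup>2) integrable_on {0..1}"
    using a2 b2 by (intro integrable_add integrable_cmult_real)
  show "\<bar>(norm (ga s - gb s))\<^sup>2\<bar> \<le> 2 * (norm (ga s))\<^sup>2 + 2 * (norm (gb s))\<^sup>2" for s
  proof -
    have "norm (ga s - gb s) \<le> norm (ga s) + norm (gb s)" by (rule norm_triangle_ineq4)
    then have "(norm (ga s - gb s))\<^sup>2 \<le> (norm (ga s) + norm (gb s))\<^sup>2"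
      by (intro power_mono) auto
    also have "\<dots> \<le> 2 * (norm (ga s))\<^sup>2 + 2 * (norm (gb s))\<^sup>2"
      using zero_le_power2[of "norm (ga s) - norm (gb s)"] unfolding power2_diff power2_sum by linarith
    finally show ?thesis by simp
  qed
  show "{0..1::real} \<in> sets lebesgue" by simp
qed

lemma Hp_diff:
  assumes "Hp a" "Hp b" shows "Hp (\<lambda>s. a s - b s)"
proof -
  obtain ga where ga: "weak_second_deriv a ga" "(\<lambda>s. (norm (ga s))\<^sup>2) integrable_on {0..1}"
    using assms(1) Hp_def by blast
  obtain gb where gb: "weak_second_deriv b gb" "(\<lambda>s. (norm (gb s))\<^sup>2) integrable_on {0..1}"
    using assms(2) Hp_def by blast
  have "(\<lambda>s. (norm (ga s - gb s))\<^sup>2) integrable_on {0..1}"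
    using ga gb unfolding weak_second_deriv_def by (intro sq_int_diff) auto
  then show ?thesis unfolding Hp_def using wsd_diff[OF ga(1) gb(1)] by blast
qed

lemma Hp_scale:
  assumes "Hp a" shows "Hp (\<lambda>s. c *\<^sub>R a s)"
proof -
  obtain ga where ga: "weak_second_deriv a ga" "(\<lambda>s. (norm (ga s))\<^sup>2) integrable_on {0..1}"
    using assms(1) Hp_def by blast
  have eq: "(\<lambda>s. (norm (c *\<^sub>R ga s))\<^sup>2) = (\<lambda>s. c\<^sup>2 * (norm (ga s))\<^sup>2)"
    by (simp add: power_mult_distrib)
  have "(\<lambda>s. (norm (c *\<^sub>R ga s))\<^sup>2) integrable_on {0..1}"
    unfolding eq by (intro integrable_cmult_real ga(2))
  then show ?thesis unfolding Hp_def using wsd_scale[OF ga(1)] by blast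
qed

lemma shift_lim:
  fixes f :: "real \<Rightarrow> real"
  assumes "((\<lambda>h. f (t + h)) \<longlongrightarrow> l) (at 0 within {h. t + h \<in> S})"
  shows "(f \<longlongrightarrow> l) (at t within S)"
  unfolding tendsto_iff eventually_at
proof (intro allI impI)
  fix e :: real assume e: "e > 0"
  from assms[unfolded tendsto_iff eventually_at, rule_format, OF e]
  obtain d where d: "d > 0" and H: "\<forall>x\<in>{h. t + h \<in> S}. x \<noteq> 0 \<and> dist x 0 < d \<longrightarrow> dist (f (t + x)) l < e"
    by blast
  show "\<exists>d>0. \<forall>y\<in>S. y \<noteq> t \<and> dist y t < d \<longrightarrow> dist (f y) l < e"
  proof (intro exI[of _ d] conjI ballI impI)
    fix y assume y: "y \<in> S" "y \<noteq> t \<and> dist y t < d"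
    have "dist (f (t + (y - t))) l < e"
      using H[rule_format, of "y - t"] y by (auto simp: dist_real_def)
    then show "dist (f y) l < e" by simp
  qed (rule d)
qed

lemma in_A_Hp: "in_A \<eta> \<Longrightarrow> Hp \<eta>"
  unfolding in_A_def in_K_def in_H2_def Hp_def by blast

lemma in_H2_Hp: "in_H2 \<eta> \<Longrightarrow> Hp \<eta>"
  unfolding in_H2_def Hp_def by blast



lemma G_deriv: "((\<lambda>x::real. x * sqrt \<bar>x\<bar>) has_real_derivative (3/2) * sqrt \<bar>x\<bar>) (at x)"
proof (cases "x = 0")
  case True
  have ev: "\<forall>\<^sub>F y in at (0::real). sqrt \<bar>y\<bar> = (y * sqrt \<bar>y\<bar> - 0 * sqrt \<bar>0\<bar>) / (y - 0)"
    unfolding eventually_at_filter by (rule always_eventually) auto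
  have "((\<lambda>y::real. sqrt \<bar>y\<bar>) \<longlongrightarrow> sqrt \<bar>0\<bar>) (at 0)"
    by (intro tendsto_intros tendsto_ident_at)
  then have "((\<lambda>y. (y * sqrt \<bar>y\<bar> - 0 * sqrt \<bar>0\<bar>) / (y - 0)) \<longlongrightarrow> 0) (at (0::real))"
    using Lim_transform_eventually[OF _ ev] by simp
  then show ?thesis using True by (simp add: has_field_derivative_iff)
next
  case False
  show ?thesis
  proof (cases "x > 0")
    case True
    have d: "((\<lambda>y. y * sqrt y) has_real_derivative (1 * sqrt x + (inverse (sqrt x) / 2) * x)) (at x)"
      by (intro DERIV_mult DERIV_ident DERIV_real_sqrt True)
    have eq: "1 * sqrt x + (inverse (sqrt x) / 2) * x = (3/2) * sqrt \<bar>x\<bar>"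
      using True by (simp add: field_simps)
    have d': "((\<lambda>y. y * sqrt y) has_real_derivative (3/2) * sqrt \<bar>x\<bar>) (at x)" using d unfolding eq .
    show ?thesis
      by (rule has_field_derivative_transform_within_open[OF d', of "{0<..}"]) (use True in auto)
  next
    case neg: False
    then have xn: "x < 0" using \<open>x \<noteq> 0\<close> by simp
    have d: "((\<lambda>y. y * sqrt (- y)) has_real_derivative (1 * sqrt (-x) + ((inverse (sqrt (-x)) / 2) * (-1)) * x)) (at x)"
      by (intro DERIV_mult DERIV_ident DERIV_chain2[OF DERIV_real_sqrt] DERIV_minus) (use xn in auto)
    have eq: "1 * sqrt (-x) + ((inverse (sqrt (-x)) / 2) * (-1)) * x = (3/2) * sqrt \<bar>x\<bar>"
    proof -
      have s: "sqrt (-x) * sqrt (-x) = -x" using xn by simp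
      have p: "sqrt (-x) > 0" using xn by simp
      show ?thesis using xn s p by (simp add: field_simps)
    qed
    have d': "((\<lambda>y. y * sqrt (- y)) has_real_derivative (3/2) * sqrt \<bar>x\<bar>) (at x)" using d unfolding eq .
    show ?thesis
      by (rule has_field_derivative_transform_within_open[OF d', of "{..<0}"]) (use xn in auto)
  qed
qed

lemma G_strict: fixes x y :: real assumes "x < y" shows "x * sqrt \<bar>x\<bar> < y * sqrt \<bar>y\<bar>"
proof (cases "0 \<le> x")
  case True
  then show ?thesis using assms by (simp add: mult_strict_mono)
next
  case False
  show ?thesis
  proof (cases "y \<le> 0")
    case True
    have "(-y) * sqrt (-y) < (-x) * sqrt (-x)"
      using assms True by (intro mult_strict_mono) auto
    moreover have "x * sqrt \<bar>x\<bar> = - ((-x) * sqrt (-x))" "y * sqrt \<bar>y\<bar> = - ((-y) * sqrt (-y))"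
      using False True by auto
    ultimately show ?thesis by linarith
  next
    case yp: False
    have "x * sqrt \<bar>x\<bar> < 0" using False by (simp add: mult_neg_pos)
    moreover have "0 < y * sqrt \<bar>y\<bar>" using yp by simp
    ultimately show ?thesis by simp
  qed
qed

lemma A_lip:
  assumes "in_A \<eta>"
  shows "norm (\<eta> x - \<eta> y) \<le> curve_length \<eta> * norm (x - y)"
proof (rule differentiable_bound[where S=UNIV and f'="\<lambda>x h. h *\<^sub>R vd \<eta> x"])
  have H: "Hp \<eta>" by (rule in_A_Hp[OF assms])
  fix z :: real
  show "(\<eta> has_derivative (\<lambda>h. h *\<^sub>R vd \<eta> z)) (at z within UNIV)"
    using Hp_diffble[OF H, of z] vector_derivative_works has_vector_derivative_def by blast
  have "onorm (\<lambda>h::real. h *\<^sub>R vd \<eta> z) = onorm (\<lambda>h::real. h) * norm (vd \<eta> z)"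
    by (rule onorm_scaleR_left[OF bounded_linear_ident])
  also have "\<dots> = curve_length \<eta>" using assms unfolding in_A_def by (simp add: onorm_id)
  finally show "onorm (\<lambda>h::real. h *\<^sub>R vd \<eta> z) \<le> curve_length \<eta>" by simp
qed auto

lemma A_sup:
  assumes A: "in_A \<eta>" and s: "s \<in> {0..1}"
  shows "norm (\<eta> s) \<le> curve_length \<eta>"
proof -
  have H: "Hp \<eta>" by (rule in_A_Hp[OF A])
  have m0: "integral {0..1} \<eta> = 0" using A unfolding in_A_def in_K_def by blast
  have Lnn: "curve_length \<eta> \<ge> 0" using A unfolding in_A_def by simp
  have ie: "\<eta> integrable_on {0..1}" by (rule integrable_continuous_interval[OF Hp_cont[OF H]])
  have "integral {0..1} (\<lambda>r. \<eta> s - \<eta> r) = integral {0..1} (\<lambda>r::real. \<eta> s) - integral {0..1} \<eta>"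
    by (rule Henstock_Kurzweil_Integration.integral_diff[OF integrable_const_ivl ie])
  also have "\<dots> = \<eta> s" using m0 by simp
  finally have eq: "\<eta> s = integral {0..1} (\<lambda>r. \<eta> s - \<eta> r)" by simp
  have "norm (integral {0..1} (\<lambda>r. \<eta> s - \<eta> r)) \<le> integral {0..1} (\<lambda>r::real. curve_length \<eta>)"
  proof (rule integral_norm_bound_integral)
    show "(\<lambda>r. \<eta> s - \<eta> r) integrable_on {0..1}" by (intro integrable_diff integrable_const_ivl ie)
    show "(\<lambda>r::real. curve_length \<eta>) integrable_on {0..1}" by (rule integrable_const_ivl)
    fix r :: real assume r: "r \<in> {0..1}"
    have "norm (\<eta> s - \<eta> r) \<le> curve_length \<eta> * norm (s - r)" by (rule A_lip[OF A])
    also have "\<dots> \<le> curve_length \<eta> * 1" using r s Lnn by (intro mult_left_mono) auto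
    finally show "norm (\<eta> s - \<eta> r) \<le> curve_length \<eta>" by simp
  qed
  then show ?thesis using eq by simp
qed



definition Qd :: "(real \<Rightarrow> ('d::finite) curve) \<Rightarrow> (real \<Rightarrow> 'd curve) \<Rightarrow> real \<Rightarrow> real \<Rightarrow> 'd curve" where
  "Qd \<gamma> \<gamma>' t h = (\<lambda>s. (1 / h) *\<^sub>R (\<gamma> (t + h) s - \<gamma> t s) - \<gamma>' t s)"

lemma P_A: "C1_path_A \<gamma> \<gamma>' \<Longrightarrow> t \<in> {0..1} \<Longrightarrow> in_A (\<gamma> t)"
  unfolding C1_path_A_def by blast
lemma P_Hp: "C1_path_A \<gamma> \<gamma>' \<Longrightarrow> t \<in> {0..1} \<Longrightarrow> Hp (\<gamma> t)"
  using P_A in_A_Hp by blast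
lemma P_Hp': "C1_path_A \<gamma> \<gamma>' \<Longrightarrow> t \<in> {0..1} \<Longrightarrow> Hp (\<gamma>' t)"
  unfolding C1_path_A_def using in_H2_Hp by blast
lemma P_lim: "C1_path_A \<gamma> \<gamma>' \<Longrightarrow> t \<in> {0..1} \<Longrightarrow>
   ((\<lambda>h. H2_norm (Qd \<gamma> \<gamma>' t h)) \<longlongrightarrow> 0) (at 0 within {h. t + h \<in> {0..1}})"
  unfolding C1_path_A_def Qd_def by blast
lemma P_lim2: "C1_path_A \<gamma> \<gamma>' \<Longrightarrow> t \<in> {0..1} \<Longrightarrow>
   ((\<lambda>u. H2_norm (\<lambda>s. \<gamma>' u s - \<gamma>' t s)) \<longlongrightarrow> 0) (at t within {0..1})"
  unfolding C1_path_A_def by blast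

lemma P_Q_Hp:
  assumes P: "C1_path_A \<gamma> \<gamma>'" and t: "t \<in> {0..1}" and th: "t + h \<in> {0..1}"
  shows "Hp (Qd \<gamma> \<gamma>' t h)"
  unfolding Qd_def
  by (intro Hp_diff Hp_scale P_Hp[OF P t] P_Hp[OF P th] P_Hp'[OF P t])

lemma vd_Q:
  assumes a: "Hp a" and b: "Hp b" and c: "Hp c"
  shows "vd (\<lambda>s. (1 / h) *\<^sub>R (a s - b s) - c s) x = (1 / h) *\<^sub>R (vd a x - vd b x) - vd c x"
proof -
  have da: "a differentiable at x" by (rule Hp_diffble[OF a])
  have db: "b differentiable at x" by (rule Hp_diffble[OF b])
  have dc: "c differentiable at x" by (rule Hp_diffble[OF c])
  have dab: "(\<lambda>s. a s - b s) differentiable at x" using da db by simp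
  have dX: "(\<lambda>s. (1 / h) *\<^sub>R (a s - b s)) differentiable at x"
    using dab by (intro differentiable_scaleR) auto
  have "vd (\<lambda>s. (1 / h) *\<^sub>R (a s - b s) - c s) x = vd (\<lambda>s. (1 / h) *\<^sub>R (a s - b s)) x - vd c x"
    by (rule vector_derivative_diff_at[OF dX dc])
  also have "vd (\<lambda>s. (1 / h) *\<^sub>R (a s - b s)) x = (1 / h) *\<^sub>R vd (\<lambda>s. a s - b s) x"
    by (rule vd_scale[OF dab])
  also have "vd (\<lambda>s. a s - b s) x = vd a x - vd b x"
    by (rule vector_derivative_diff_at[OF da db])
  finally show ?thesis .
qed

lemma L_bound:
  assumes P: "C1_path_A \<gamma> \<gamma>'" and t: "t \<in> {0..1}" and th: "t + h \<in> {0..1}" and h: "h \<noteq> 0"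
  shows "\<bar>curve_length (\<gamma> (t + h)) - curve_length (\<gamma> t)\<bar> \<le> \<bar>h\<bar> * (H2_norm (Qd \<gamma> \<gamma>' t h) + H2_norm (\<gamma>' t))"
proof -
  define a where "a = \<gamma> (t + h)"
  define b where "b = \<gamma> t"
  define c where "c = \<gamma>' t"
  define Q where "Q = Qd \<gamma> \<gamma>' t h"
  have Ha: "Hp a" unfolding a_def by (rule P_Hp[OF P th])
  have Hb: "Hp b" unfolding b_def by (rule P_Hp[OF P t])
  have Hc: "Hp c" unfolding c_def by (rule P_Hp'[OF P t])
  have HQ: "Hp Q" unfolding Q_def by (rule P_Q_Hp[OF P t th])
  have Qeq: "Q = (\<lambda>s. (1 / h) *\<^sub>R (a s - b s) - c s)" unfolding Q_def Qd_def a_def b_def c_def ..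
  have eqv: "vd a s - vd b s = h *\<^sub>R (vd Q s + vd c s)" for s
    unfolding Qeq vd_Q[OF Ha Hb Hc] using h by simp
  have ia: "(\<lambda>s. norm (vd a s)) integrable_on {0..1}"
    by (rule integrable_continuous_interval) (intro continuous_intros Hp_dcont[OF Ha])
  have ib: "(\<lambda>s. norm (vd b s)) integrable_on {0..1}"
    by (rule integrable_continuous_interval) (intro continuous_intros Hp_dcont[OF Hb])
  have iQ: "(\<lambda>s. norm (vd Q s)) integrable_on {0..1}"
    by (rule integrable_continuous_interval) (intro continuous_intros Hp_dcont[OF HQ])
  have ic: "(\<lambda>s. norm (vd c s)) integrable_on {0..1}"
    by (rule integrable_continuous_interval) (intro continuous_intros Hp_dcont[OF Hc])
  have "curve_length a - curve_length b = integral {0..1} (\<lambda>s. norm (vd a s) - norm (vd b s))"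
    unfolding curve_length_def by (rule Henstock_Kurzweil_Integration.integral_diff[OF ia ib, symmetric])
  also have "\<bar>\<dots>\<bar> \<le> integral {0..1} (\<lambda>s. \<bar>h\<bar> * (norm (vd Q s) + norm (vd c s)))"
  proof -
    have "norm (integral {0..1} (\<lambda>s. norm (vd a s) - norm (vd b s))) \<le> integral {0..1} (\<lambda>s. \<bar>h\<bar> * (norm (vd Q s) + norm (vd c s)))"
    proof (rule integral_norm_bound_integral)
      show "(\<lambda>s. norm (vd a s) - norm (vd b s)) integrable_on {0..1}" by (rule integrable_diff[OF ia ib])
      show "(\<lambda>s. \<bar>h\<bar> * (norm (vd Q s) + norm (vd c s))) integrable_on {0..1}"
        by (intro integrable_cmult_real integrable_add iQ ic)
      fix s :: real
      have "norm (norm (vd a s) - norm (vd b s)) \<le> norm (vd a s - vd b s)" by (simp add: norm_triangle_ineq3)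
      also have "\<dots> = \<bar>h\<bar> * norm (vd Q s + vd c s)" unfolding eqv by simp
      also have "\<dots> \<le> \<bar>h\<bar> * (norm (vd Q s) + norm (vd c s))" by (intro mult_left_mono norm_triangle_ineq) auto
      finally show "norm (norm (vd a s) - norm (vd b s)) \<le> \<bar>h\<bar> * (norm (vd Q s) + norm (vd c s))" .
    qed
    then show ?thesis by simp
  qed
  also have "\<dots> = \<bar>h\<bar> * (integral {0..1} (\<lambda>s. norm (vd Q s)) + integral {0..1} (\<lambda>s. norm (vd c s)))"
    by (simp add: Henstock_Kurzweil_Integration.integral_add[OF iQ ic])
  also have "\<dots> \<le> \<bar>h\<bar> * (H2_norm Q + H2_norm c)"
    by (intro mult_left_mono add_mono Hp_L1(2)[OF HQ] Hp_L1(2)[OF Hc]) auto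
  finally show ?thesis unfolding a_def b_def c_def Q_def .
qed

lemma contL:
  assumes P: "C1_path_A \<gamma> \<gamma>'"
  shows "continuous_on {0..1} (\<lambda>t. curve_length (\<gamma> t))"
  unfolding continuous_on_def
proof (intro ballI)
  fix t :: real assume t: "t \<in> {0..1}"
  let ?W = "{h. t + h \<in> {0..1::real}}"
  have "((\<lambda>h. curve_length (\<gamma> (t + h)) - curve_length (\<gamma> t)) \<longlongrightarrow> 0) (at 0 within ?W)"
  proof (rule Lim_null_comparison)
    show "\<forall>\<^sub>F h in at 0 within ?W. norm (curve_length (\<gamma> (t + h)) - curve_length (\<gamma> t))
            \<le> \<bar>h\<bar> * (H2_norm (Qd \<gamma> \<gamma>' t h) + H2_norm (\<gamma>' t))"
      unfolding eventually_at_filter by (rule always_eventually) (auto intro: L_bound[OF P t])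
    have "((\<lambda>h::real. \<bar>h\<bar>) \<longlongrightarrow> \<bar>0\<bar>) (at 0 within ?W)"
      by (intro tendsto_intros)
    then have "((\<lambda>h. \<bar>h\<bar> * (H2_norm (Qd \<gamma> \<gamma>' t h) + H2_norm (\<gamma>' t))) \<longlongrightarrow> \<bar>0\<bar> * (0 + H2_norm (\<gamma>' t))) (at 0 within ?W)"
      by (intro tendsto_mult tendsto_add P_lim[OF P t] tendsto_const)
    then show "((\<lambda>h. \<bar>h\<bar> * (H2_norm (Qd \<gamma> \<gamma>' t h) + H2_norm (\<gamma>' t))) \<longlongrightarrow> 0) (at 0 within ?W)"
      by simp
  qed
  then have "((\<lambda>h. curve_length (\<gamma> (t + h))) \<longlongrightarrow> curve_length (\<gamma> t)) (at 0 within ?W)"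
    by (subst Lim_null)
  then show "((\<lambda>t. curve_length (\<gamma> t)) \<longlongrightarrow> curve_length (\<gamma> t)) (at t within {0..1})"
    by (rule shift_lim)
qed



lemma sq_diff_real:
  fixes x y d :: real
  assumes "0 \<le> x" "0 \<le> y" "\<bar>x - y\<bar> \<le> d"
  shows "\<bar>x\<^sup>2 - y\<^sup>2\<bar> \<le> d\<^sup>2 + 2 * (d * y)"
proof -
  have d0: "0 \<le> d" using assms(3) by linarith
  have f: "x\<^sup>2 - y\<^sup>2 = (x - y) * (x + y)" by (simp add: power2_eq_square algebra_simps)
  have "\<bar>x\<^sup>2 - y\<^sup>2\<bar> = \<bar>x - y\<bar> * (x + y)"
    unfolding f abs_mult using assms(1,2) by simp
  also have "\<dots> \<le> d * (x + y)" using assms by (intro mult_right_mono) auto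
  also have "\<dots> \<le> d * (2 * y + d)" using assms d0 by (intro mult_left_mono) auto
  also have "\<dots> = d\<^sup>2 + 2 * (d * y)" by (simp add: power2_eq_square algebra_simps)
  finally show ?thesis .
qed

lemma sq_int_bound:
  fixes a b :: "real \<Rightarrow> 'a::euclidean_space"
  assumes ca: "continuous_on {0..1} a" and cb: "continuous_on {0..1} b"
  shows "\<bar>integral {0..1} (\<lambda>s. (norm (a s))\<^sup>2) - integral {0..1} (\<lambda>s. (norm (b s))\<^sup>2)\<bar>
    \<le> integral {0..1} (\<lambda>s. (norm (a s - b s))\<^sup>2)
       + 2 * (sqrt (integral {0..1} (\<lambda>s. (norm (a s - b s))\<^sup>2)) * sqrt (integral {0..1} (\<lambda>s. (norm (b s))\<^sup>2)))"
proof -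
  have cab: "continuous_on {0..1} (\<lambda>s. a s - b s)" using ca cb by (intro continuous_intros)
  have i1: "(\<lambda>s. (norm (a s))\<^sup>2) integrable_on {0..1}"
    by (rule integrable_continuous_interval) (intro continuous_intros ca)
  have i2: "(\<lambda>s. (norm (b s))\<^sup>2) integrable_on {0..1}"
    by (rule integrable_continuous_interval) (intro continuous_intros cb)
  have i3: "(\<lambda>s. (norm (a s - b s))\<^sup>2) integrable_on {0..1}"
    by (rule integrable_continuous_interval) (intro continuous_intros cab)
  have i4: "(\<lambda>s. norm (a s - b s) * norm (b s)) integrable_on {0..1}"
    by (rule integrable_continuous_interval) (intro continuous_intros cab cb)
  have "integral {0..1} (\<lambda>s. (norm (a s))\<^sup>2) - integral {0..1} (\<lambda>s. (norm (b s))\<^sup>2)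
      = integral {0..1} (\<lambda>s. (norm (a s))\<^sup>2 - (norm (b s))\<^sup>2)"
    by (rule Henstock_Kurzweil_Integration.integral_diff[OF i1 i2, symmetric])
  also have "\<bar>\<dots>\<bar> \<le> integral {0..1} (\<lambda>s. (norm (a s - b s))\<^sup>2 + 2 * (norm (a s - b s) * norm (b s)))"
  proof -
    have "norm (integral {0..1} (\<lambda>s. (norm (a s))\<^sup>2 - (norm (b s))\<^sup>2))
      \<le> integral {0..1} (\<lambda>s. (norm (a s - b s))\<^sup>2 + 2 * (norm (a s - b s) * norm (b s)))"
    proof (rule integral_norm_bound_integral)
      show "(\<lambda>s. (norm (a s))\<^sup>2 - (norm (b s))\<^sup>2) integrable_on {0..1}" by (rule integrable_diff[OF i1 i2])
      show "(\<lambda>s. (norm (a s - b s))\<^sup>2 + 2 * (norm (a s - b s) * norm (b s))) integrable_on {0..1}"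
        by (intro integrable_add integrable_cmult_real i3 i4)
      fix s :: real
      have "\<bar>norm (a s) - norm (b s)\<bar> \<le> norm (a s - b s)" by (rule norm_triangle_ineq3)
      then show "norm ((norm (a s))\<^sup>2 - (norm (b s))\<^sup>2) \<le> (norm (a s - b s))\<^sup>2 + 2 * (norm (a s - b s) * norm (b s))"
        using sq_diff_real[of "norm (a s)" "norm (b s)" "norm (a s - b s)"] by simp
    qed
    then show ?thesis by simp
  qed
  also have "\<dots> = integral {0..1} (\<lambda>s. (norm (a s - b s))\<^sup>2) + 2 * integral {0..1} (\<lambda>s. norm (a s - b s) * norm (b s))"
    by (simp add: Henstock_Kurzweil_Integration.integral_add[OF i3 integrable_cmult_real[OF i4]] integral_mult[OF i4, symmetric])
  also have "\<dots> \<le> integral {0..1} (\<lambda>s. (norm (a s - b s))\<^sup>2)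
       + 2 * (sqrt (integral {0..1} (\<lambda>s. (norm (a s - b s))\<^sup>2)) * sqrt (integral {0..1} (\<lambda>s. (norm (b s))\<^sup>2)))"
    using cs_cont[OF cab cb] by simp
  finally show ?thesis .
qed

lemma contL2:
  assumes P: "C1_path_A \<gamma> \<gamma>'"
  shows "continuous_on {0..1} (\<lambda>t. L2_norm (\<gamma>' t))"
proof -
  have "continuous_on {0..1} (\<lambda>t. integral {0..1} (\<lambda>s. (norm (\<gamma>' t s))\<^sup>2))"
    unfolding continuous_on_def
  proof (intro ballI)
    fix t :: real assume t: "t \<in> {0..1}"
    define B where "B = integral {0..1} (\<lambda>s. (norm (\<gamma>' t s))\<^sup>2)"
    define E where "E = (\<lambda>u. H2_norm (\<lambda>s. \<gamma>' u s - \<gamma>' t s))"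
    have Bnn: "0 \<le> B" unfolding B_def by (rule integral_nonneg_any) simp
    have "((\<lambda>u. integral {0..1} (\<lambda>s. (norm (\<gamma>' u s))\<^sup>2) - B) \<longlongrightarrow> 0) (at t within {0..1})"
    proof (rule Lim_null_comparison)
      show "\<forall>\<^sub>F u in at t within {0..1}. norm (integral {0..1} (\<lambda>s. (norm (\<gamma>' u s))\<^sup>2) - B) \<le> (E u)\<^sup>2 + 2 * (E u * sqrt B)"
        unfolding eventually_at_filter
      proof (rule always_eventually, intro allI impI)
        fix u :: real assume u: "u \<in> {0..1}"
        have Hu: "Hp (\<gamma>' u)" by (rule P_Hp'[OF P u])
        have Ht: "Hp (\<gamma>' t)" by (rule P_Hp'[OF P t])
        have Hd: "Hp (\<lambda>s. \<gamma>' u s - \<gamma>' t s)" by (rule Hp_diff[OF Hu Ht])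
        have e1: "integral {0..1} (\<lambda>s. (norm (\<gamma>' u s - \<gamma>' t s))\<^sup>2) \<le> (E u)\<^sup>2"
          unfolding E_def by (rule Hp_sq_bounds(1)[OF Hd])
        have e2: "sqrt (integral {0..1} (\<lambda>s. (norm (\<gamma>' u s - \<gamma>' t s))\<^sup>2)) \<le> E u"
          unfolding E_def using Hp_L1(3)[OF Hd] unfolding L2_norm_def .
        have "norm (integral {0..1} (\<lambda>s. (norm (\<gamma>' u s))\<^sup>2) - B)
          \<le> integral {0..1} (\<lambda>s. (norm (\<gamma>' u s - \<gamma>' t s))\<^sup>2)
            + 2 * (sqrt (integral {0..1} (\<lambda>s. (norm (\<gamma>' u s - \<gamma>' t s))\<^sup>2)) * sqrt B)"
          unfolding B_def real_norm_def by (rule sq_int_bound[OF Hp_cont[OF Hu] Hp_cont[OF Ht]])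
        also have "\<dots> \<le> (E u)\<^sup>2 + 2 * (E u * sqrt B)"
          using e1 e2 Bnn by (intro add_mono mult_left_mono mult_right_mono) auto
        finally show "norm (integral {0..1} (\<lambda>s. (norm (\<gamma>' u s))\<^sup>2) - B) \<le> (E u)\<^sup>2 + 2 * (E u * sqrt B)" .
      qed
      have E0: "(E \<longlongrightarrow> 0) (at t within {0..1})" unfolding E_def by (rule P_lim2[OF P t])
      have "((\<lambda>u. (E u)\<^sup>2 + 2 * (E u * sqrt B)) \<longlongrightarrow> 0\<^sup>2 + 2 * (0 * sqrt B)) (at t within {0..1})"
        by (intro tendsto_intros E0)
      then show "((\<lambda>u. (E u)\<^sup>2 + 2 * (E u * sqrt B)) \<longlongrightarrow> 0) (at t within {0..1})" by simp
    qed
    then show "((\<lambda>t. integral {0..1} (\<lambda>s. (norm (\<gamma>' t s))\<^sup>2)) \<longlongrightarrow> integral {0..1} (\<lambda>s. (norm (\<gamma>' t s))\<^sup>2)) (at t within {0..1})"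
      unfolding B_def by (subst Lim_null)
  qed
  then show ?thesis unfolding L2_norm_def by (intro continuous_intros)
qed



lemma inner_int:
  assumes "Hp v" and cw: "continuous_on {0..1} w"
  shows "(\<lambda>s. v s \<bullet> w s) integrable_on {0..1}"
  by (rule integrable_continuous_interval) (intro continuous_on_inner Hp_cont[OF assms(1)] cw)

lemma psi_deriv:
  assumes P: "C1_path_A \<gamma> \<gamma>'" and t: "t \<in> {0..1}" and cw: "continuous_on {0..1} w"
    and wb: "\<And>s. s \<in> {0..1} \<Longrightarrow> norm (w s) \<le> Wb" and Wb0: "0 \<le> Wb"
  shows "((\<lambda>t. integral {0..1} (\<lambda>s. \<gamma> t s \<bullet> w s)) has_real_derivative integral {0..1} (\<lambda>s. \<gamma>' t s \<bullet> w s)) (at t within {0..1})"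
proof -
  define \<psi> where "\<psi> = (\<lambda>t. integral {0..1} (\<lambda>s. \<gamma> t s \<bullet> w s))"
  define d where "d = integral {0..1} (\<lambda>s. \<gamma>' t s \<bullet> w s)"
  let ?W = "{h. t + h \<in> {0..1::real}}"
  have bound: "norm ((\<psi> (t + h) - \<psi> t) / (t + h - t) - d) \<le> Wb * H2_norm (Qd \<gamma> \<gamma>' t h)"
    if th: "t + h \<in> {0..1}" and h: "h \<noteq> 0" for h
  proof -
    have H1: "Hp (\<gamma> (t + h))" by (rule P_Hp[OF P th])
    have H2: "Hp (\<gamma> t)" by (rule P_Hp[OF P t])
    have H3: "Hp (\<gamma>' t)" by (rule P_Hp'[OF P t])
    have HQ: "Hp (Qd \<gamma> \<gamma>' t h)" by (rule P_Q_Hp[OF P t th])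
    have iA: "(\<lambda>s. \<gamma> (t + h) s \<bullet> w s) integrable_on {0..1}" by (rule inner_int[OF H1 cw])
    have iB: "(\<lambda>s. \<gamma> t s \<bullet> w s) integrable_on {0..1}" by (rule inner_int[OF H2 cw])
    have iC: "(\<lambda>s. \<gamma>' t s \<bullet> w s) integrable_on {0..1}" by (rule inner_int[OF H3 cw])
    have iQ: "(\<lambda>s. Qd \<gamma> \<gamma>' t h s \<bullet> w s) integrable_on {0..1}" by (rule inner_int[OF HQ cw])
    have pw: "Qd \<gamma> \<gamma>' t h s \<bullet> w s = (1 / h) * (\<gamma> (t + h) s \<bullet> w s - \<gamma> t s \<bullet> w s) - \<gamma>' t s \<bullet> w s" for s
      unfolding Qd_def by (simp add: inner_diff_left)
    have "integral {0..1} (\<lambda>s. Qd \<gamma> \<gamma>' t h s \<bullet> w s)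
        = integral {0..1} (\<lambda>s. (1 / h) * (\<gamma> (t + h) s \<bullet> w s - \<gamma> t s \<bullet> w s) - \<gamma>' t s \<bullet> w s)"
      unfolding pw ..
    also have "\<dots> = integral {0..1} (\<lambda>s. (1 / h) * (\<gamma> (t + h) s \<bullet> w s - \<gamma> t s \<bullet> w s)) - d"
      unfolding d_def by (rule Henstock_Kurzweil_Integration.integral_diff[OF integrable_cmult_real[OF integrable_diff[OF iA iB]] iC])
    also have "integral {0..1} (\<lambda>s. (1 / h) * (\<gamma> (t + h) s \<bullet> w s - \<gamma> t s \<bullet> w s))
        = (1 / h) * integral {0..1} (\<lambda>s. \<gamma> (t + h) s \<bullet> w s - \<gamma> t s \<bullet> w s)"
      by (rule integral_mult[symmetric, OF integrable_diff[OF iA iB]])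
    also have "integral {0..1} (\<lambda>s. \<gamma> (t + h) s \<bullet> w s - \<gamma> t s \<bullet> w s) = \<psi> (t + h) - \<psi> t"
      unfolding \<psi>_def by (rule Henstock_Kurzweil_Integration.integral_diff[OF iA iB])
    finally have eq: "(\<psi> (t + h) - \<psi> t) / (t + h - t) - d = integral {0..1} (\<lambda>s. Qd \<gamma> \<gamma>' t h s \<bullet> w s)"
      by simp
    have iN: "(\<lambda>s. norm (Qd \<gamma> \<gamma>' t h s)) integrable_on {0..1}"
      by (rule integrable_continuous_interval) (intro continuous_intros Hp_cont[OF HQ])
    have "norm (integral {0..1} (\<lambda>s. Qd \<gamma> \<gamma>' t h s \<bullet> w s)) \<le> integral {0..1} (\<lambda>s. Wb * norm (Qd \<gamma> \<gamma>' t h s))"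
    proof (rule integral_norm_bound_integral[OF iQ integrable_cmult_real[OF iN]])
      fix s :: real assume s: "s \<in> {0..1}"
      have "norm (Qd \<gamma> \<gamma>' t h s \<bullet> w s) \<le> norm (Qd \<gamma> \<gamma>' t h s) * norm (w s)"
        using Cauchy_Schwarz_ineq2 by simp
      also have "\<dots> \<le> norm (Qd \<gamma> \<gamma>' t h s) * Wb" by (intro mult_left_mono wb s) simp
      finally show "norm (Qd \<gamma> \<gamma>' t h s \<bullet> w s) \<le> Wb * norm (Qd \<gamma> \<gamma>' t h s)" by (simp add: mult.commute)
    qed
    also have "\<dots> = Wb * integral {0..1} (\<lambda>s. norm (Qd \<gamma> \<gamma>' t h s))"
      by (rule integral_mult[symmetric, OF iN])
    also have "\<dots> \<le> Wb * H2_norm (Qd \<gamma> \<gamma>' t h)"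
      by (intro mult_left_mono Hp_L1(1)[OF HQ] Wb0)
    finally show ?thesis unfolding eq by simp
  qed
  have "((\<lambda>h. (\<psi> (t + h) - \<psi> t) / (t + h - t) - d) \<longlongrightarrow> 0) (at 0 within ?W)"
  proof (rule Lim_null_comparison)
    show "\<forall>\<^sub>F h in at 0 within ?W. norm ((\<psi> (t + h) - \<psi> t) / (t + h - t) - d) \<le> Wb * H2_norm (Qd \<gamma> \<gamma>' t h)"
      unfolding eventually_at_filter by (rule always_eventually, intro allI impI bound) auto
    have "((\<lambda>h. Wb * H2_norm (Qd \<gamma> \<gamma>' t h)) \<longlongrightarrow> Wb * 0) (at 0 within ?W)"
      by (intro tendsto_mult tendsto_const P_lim[OF P t])
    then show "((\<lambda>h. Wb * H2_norm (Qd \<gamma> \<gamma>' t h)) \<longlongrightarrow> 0) (at 0 within ?W)" by simp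
  qed
  then have "((\<lambda>h. (\<psi> (t + h) - \<psi> t) / (t + h - t)) \<longlongrightarrow> d) (at 0 within ?W)"
    by (subst Lim_null)
  then have "((\<lambda>y. (\<psi> y - \<psi> t) / (y - t)) \<longlongrightarrow> d) (at t within {0..1})"
    by (rule shift_lim[where f="\<lambda>y. (\<psi> y - \<psi> t) / (y - t)"])
  then show ?thesis unfolding has_field_derivative_iff \<psi>_def[symmetric] d_def[symmetric] .
qed

lemma psi_le:
  assumes P: "C1_path_A \<gamma> \<gamma>'" and t: "t \<in> {0..1}" and cw: "continuous_on {0..1} w"
  shows "\<bar>integral {0..1} (\<lambda>s. \<gamma> t s \<bullet> w s)\<bar> \<le> integral {0..1} (\<lambda>s. norm (w s)) * curve_length (\<gamma> t)"
proof -
  have H: "Hp (\<gamma> t)" by (rule P_Hp[OF P t])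
  have A: "in_A (\<gamma> t)" by (rule P_A[OF P t])
  have iw: "(\<lambda>s. norm (w s)) integrable_on {0..1}"
    by (rule integrable_continuous_interval) (intro continuous_intros cw)
  have "norm (integral {0..1} (\<lambda>s. \<gamma> t s \<bullet> w s)) \<le> integral {0..1} (\<lambda>s. curve_length (\<gamma> t) * norm (w s))"
  proof (rule integral_norm_bound_integral[OF inner_int[OF H cw] integrable_cmult_real[OF iw]])
    fix s :: real assume s: "s \<in> {0..1}"
    have "norm (\<gamma> t s \<bullet> w s) \<le> norm (\<gamma> t s) * norm (w s)"
      using Cauchy_Schwarz_ineq2 by simp
    also have "\<dots> \<le> curve_length (\<gamma> t) * norm (w s)" by (intro mult_right_mono A_sup[OF A s]) simp
    finally show "norm (\<gamma> t s \<bullet> w s) \<le> curve_length (\<gamma> t) * norm (w s)" .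
  qed
  also have "\<dots> = curve_length (\<gamma> t) * integral {0..1} (\<lambda>s. norm (w s))"
    by (rule integral_mult[symmetric, OF iw])
  finally show ?thesis by (simp add: mult.commute)
qed

lemma dpsi_le:
  assumes P: "C1_path_A \<gamma> \<gamma>'" and t: "t \<in> {0..1}" and cw: "continuous_on {0..1} w"
    and wb: "\<And>s. s \<in> {0..1} \<Longrightarrow> norm (w s) \<le> Wb" and Wb0: "0 \<le> Wb"
  shows "\<bar>integral {0..1} (\<lambda>s. \<gamma>' t s \<bullet> w s)\<bar> \<le> Wb * L2_norm (\<gamma>' t)"
proof -
  have H: "Hp (\<gamma>' t)" by (rule P_Hp'[OF P t])
  have iN: "(\<lambda>s. norm (\<gamma>' t s)) integrable_on {0..1}"
    by (rule integrable_continuous_interval) (intro continuous_intros Hp_cont[OF H])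
  have "norm (integral {0..1} (\<lambda>s. \<gamma>' t s \<bullet> w s)) \<le> integral {0..1} (\<lambda>s. Wb * norm (\<gamma>' t s))"
  proof (rule integral_norm_bound_integral[OF inner_int[OF H cw] integrable_cmult_real[OF iN]])
    fix s :: real assume s: "s \<in> {0..1}"
    have "norm (\<gamma>' t s \<bullet> w s) \<le> norm (\<gamma>' t s) * norm (w s)"
      using Cauchy_Schwarz_ineq2 by simp
    also have "\<dots> \<le> norm (\<gamma>' t s) * Wb" by (intro mult_left_mono wb s) simp
    finally show "norm (\<gamma>' t s \<bullet> w s) \<le> Wb * norm (\<gamma>' t s)" by (simp add: mult.commute)
  qed
  also have "\<dots> = Wb * integral {0..1} (\<lambda>s. norm (\<gamma>' t s))"
    by (rule integral_mult[symmetric, OF iN])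
  also have "\<dots> \<le> Wb * L2_norm (\<gamma>' t)"
    unfolding L2_norm_def by (intro mult_left_mono l1_le_l2 Hp_cont[OF H] Wb0)
  finally show ?thesis by simp
qed



lemma path_lb:
  assumes P: "C1_path_A \<gamma> \<gamma>'" and cw: "continuous_on {0..1} w"
    and wb: "\<And>s. s \<in> {0..1} \<Longrightarrow> norm (w s) \<le> Wb" and Wb0: "0 \<le> Wb"
    and W1: "integral {0..1} (\<lambda>s. norm (w s)) \<le> W1"
  shows "\<bar>(\<lambda>x. x * sqrt \<bar>x\<bar>) (integral {0..1} (\<lambda>s. \<gamma> 1 s \<bullet> w s))
          - (\<lambda>x. x * sqrt \<bar>x\<bar>) (integral {0..1} (\<lambda>s. \<gamma> 0 s \<bullet> w s))\<bar>
         \<le> ((3/2) * Wb * sqrt W1) * riem_length \<gamma> \<gamma>'"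
proof -
  define \<psi> where "\<psi> = (\<lambda>t. integral {0..1} (\<lambda>s. \<gamma> t s \<bullet> w s))"
  define \<psi>' where "\<psi>' = (\<lambda>t. integral {0..1} (\<lambda>s. \<gamma>' t s \<bullet> w s))"
  define G where "G = (\<lambda>x::real. x * sqrt \<bar>x\<bar>)"
  define F where "F = (\<lambda>t. L2_norm (\<gamma>' t) * sqrt (curve_length (\<gamma> t)))"
  define K where "K = (3/2) * Wb * sqrt W1"
  have W1nn: "0 \<le> W1" using W1 integral_nonneg_any[of "{0..1::real}" "\<lambda>s. norm (w s)"] by simp
  have der: "((\<lambda>t. G (\<psi> t)) has_vector_derivative ((3/2) * sqrt \<bar>\<psi> t\<bar> * \<psi>' t)) (at t within {0..1})"
    if t: "t \<in> {0..1}" for t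
  proof -
    have "((\<lambda>t. G (\<psi> t)) has_real_derivative ((3/2) * sqrt \<bar>\<psi> t\<bar> * \<psi>' t)) (at t within {0..1})"
      unfolding G_def \<psi>_def \<psi>'_def
      by (rule DERIV_chain2[OF G_deriv psi_deriv[OF P t cw wb Wb0]])
    then show ?thesis by (simp add: has_real_derivative_iff_has_vector_derivative)
  qed
  have hint: "((\<lambda>t. (3/2) * sqrt \<bar>\<psi> t\<bar> * \<psi>' t) has_integral (G (\<psi> 1) - G (\<psi> 0))) {0..1}"
    by (rule fundamental_theorem_of_calculus[OF _ der]) simp_all
  have Fc: "continuous_on {0..1} F"
    unfolding F_def by (intro continuous_intros contL2[OF P] contL[OF P])
  have Fi: "F integrable_on {0..1}" by (rule integrable_continuous_interval[OF Fc])
  have "norm (integral {0..1} (\<lambda>t. (3/2) * sqrt \<bar>\<psi> t\<bar> * \<psi>' t)) \<le> integral {0..1} (\<lambda>t. K * F t)"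
  proof (rule integral_norm_bound_integral[OF has_integral_integrable[OF hint] integrable_cmult_real[OF Fi]])
    fix t :: real assume t: "t \<in> {0..1}"
    have Lnn: "0 \<le> curve_length (\<gamma> t)" using P_A[OF P t] unfolding in_A_def by simp
    have "\<bar>\<psi> t\<bar> \<le> integral {0..1} (\<lambda>s. norm (w s)) * curve_length (\<gamma> t)"
      unfolding \<psi>_def by (rule psi_le[OF P t cw])
    also have "\<dots> \<le> W1 * curve_length (\<gamma> t)" by (intro mult_right_mono W1 Lnn)
    finally have s1: "sqrt \<bar>\<psi> t\<bar> \<le> sqrt W1 * sqrt (curve_length (\<gamma> t))"
      by (simp add: real_sqrt_mult[symmetric])
    have s2: "\<bar>\<psi>' t\<bar> \<le> Wb * L2_norm (\<gamma>' t)"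
      unfolding \<psi>'_def by (rule dpsi_le[OF P t cw wb Wb0])
    have "norm ((3/2) * sqrt \<bar>\<psi> t\<bar> * \<psi>' t) = (3/2) * (sqrt \<bar>\<psi> t\<bar> * \<bar>\<psi>' t\<bar>)"
      by (simp add: abs_mult)
    also have "\<dots> \<le> (3/2) * ((sqrt W1 * sqrt (curve_length (\<gamma> t))) * (Wb * L2_norm (\<gamma>' t)))"
      by (intro mult_left_mono mult_mono s1 s2) (auto simp: W1nn Lnn)
    also have "\<dots> = K * F t" unfolding K_def F_def by (simp add: algebra_simps)
    finally show "norm ((3/2) * sqrt \<bar>\<psi> t\<bar> * \<psi>' t) \<le> K * F t" .
  qed
  also have "\<dots> = K * integral {0..1} F" by (rule integral_mult[symmetric, OF Fi])
  also have "integral {0..1} F = riem_length \<gamma> \<gamma>'" unfolding F_def riem_length_def ..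
  finally have fin: "norm (integral {0..1} (\<lambda>t. (3/2) * sqrt \<bar>\<psi> t\<bar> * \<psi>' t)) \<le> K * riem_length \<gamma> \<gamma>'" .
  then have "norm (G (\<psi> 1) - G (\<psi> 0)) \<le> K * riem_length \<gamma> \<gamma>'" unfolding integral_unique[OF hint] .
  then show ?thesis by (simp only: G_def \<psi>_def K_def real_norm_def)
qed

lemma periodic_nat: "periodic1 \<eta> \<Longrightarrow> \<eta> (x + real m) = \<eta> x"
proof (induction m)
  case 0 then show ?case by simp
next
  case (Suc m)
  have "\<eta> (x + real (Suc m)) = \<eta> ((x + real m) + 1)" by (simp add: algebra_simps)
  also have "\<dots> = \<eta> (x + real m)" using Suc.prems unfolding periodic1_def by blast
  finally show ?case using Suc by simp
qed

lemma periodic_int: assumes "periodic1 \<eta>" shows "\<eta> (x + real_of_int n) = \<eta> x"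
proof (cases "n \<ge> 0")
  case True
  then obtain m where "n = int m" by (metis nonneg_eq_int)
  then show ?thesis using periodic_nat[OF assms] by simp
next
  case False
  then obtain m where m: "n = - int m" by (metis neg_int_cases less_le not_le)
  have "\<eta> ((x - real m) + real m) = \<eta> (x - real m)" by (rule periodic_nat[OF assms])
  then show ?thesis using m by simp
qed

lemma exists_in_01:
  assumes p0: "periodic1 \<eta>0" and p1: "periodic1 \<eta>1" and ne: "\<eta>0 \<noteq> \<eta>1"
  shows "\<exists>s\<in>{0..1}. \<eta>0 s \<noteq> \<eta>1 s"
proof -
  obtain x where x: "\<eta>0 x \<noteq> \<eta>1 x" using ne by blast
  define s where "s = x - of_int \<lfloor>x\<rfloor>"
  have s1: "x - real_of_int \<lfloor>x\<rfloor> \<le> 1" by linarith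
  have s01: "s \<in> {0..1}" using s1 unfolding s_def by auto
  have "x = s + of_int \<lfloor>x\<rfloor>" unfolding s_def by simp
  then have "\<eta>0 x = \<eta>0 s" "\<eta>1 x = \<eta>1 s" using periodic_int[OF p0] periodic_int[OF p1] by metis+
  then show ?thesis using x s01 by auto
qed



theorem proposition2p1:
  fixes \<eta>0 \<eta>1 :: "real \<Rightarrow> real^'d::finite"
  assumes "CARD('d) \<ge> 2"
    and "in_A \<eta>0" and "in_A \<eta>1" and "\<eta>0 \<noteq> \<eta>1"
  shows "dist_A \<eta>0 \<eta>1 > 0"
proof -
  note A0 = assms(2) and A1 = assms(3) and ne = assms(4)
  have H0: "Hp \<eta>0" by (rule in_A_Hp[OF A0])
  have H1: "Hp \<eta>1" by (rule in_A_Hp[OF A1])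
  have p0: "periodic1 \<eta>0" using A0 unfolding in_A_def in_K_def in_H2_def by blast
  have p1: "periodic1 \<eta>1" using A1 unfolding in_A_def in_K_def in_H2_def by blast
  define w where "w = (\<lambda>s. \<eta>1 s - \<eta>0 s)"
  have cw: "continuous_on {0..1} w" unfolding w_def
    by (intro continuous_intros Hp_cont[OF H1] Hp_cont[OF H0])
  obtain B where B: "B \<ge> 0" "\<And>s. s \<in> {0..1} \<Longrightarrow> norm (w s) \<le> B"
    using continuous_on_compact_bound[OF compact_Icc cw] by blast
  define Wb where "Wb = B + 1"
  define W1 where "W1 = integral {0..1} (\<lambda>s. norm (w s)) + 1"
  have Wbp: "Wb > 0" unfolding Wb_def using B(1) by simp
  have wb: "norm (w s) \<le> Wb" if "s \<in> {0..1}" for s unfolding Wb_def using B(2)[OF that] by simp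
  have W1nn: "0 \<le> integral {0..1} (\<lambda>s. norm (w s))" by (rule integral_nonneg_any) simp
  have W1p: "W1 > 0" unfolding W1_def using W1nn by simp
  have W1le: "integral {0..1} (\<lambda>s. norm (w s)) \<le> W1" unfolding W1_def by simp
  define \<psi>0 where "\<psi>0 = integral {0..1} (\<lambda>s. \<eta>0 s \<bullet> w s)"
  define \<psi>1 where "\<psi>1 = integral {0..1} (\<lambda>s. \<eta>1 s \<bullet> w s)"
  have "\<psi>1 - \<psi>0 = integral {0..1} (\<lambda>s. \<eta>1 s \<bullet> w s - \<eta>0 s \<bullet> w s)"
    unfolding \<psi>0_def \<psi>1_def
    by (rule Henstock_Kurzweil_Integration.integral_diff[OF inner_int[OF H1 cw] inner_int[OF H0 cw], symmetric])
  also have "\<dots> = integral {0..1} (\<lambda>s. (norm (w s))\<^sup>2)"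
    by (simp add: w_def inner_diff_left[symmetric] power2_norm_eq_inner)
  finally have diff: "\<psi>1 - \<psi>0 = integral {0..1} (\<lambda>s. (norm (w s))\<^sup>2)" .
  obtain s where s: "s \<in> {0..1}" "\<eta>0 s \<noteq> \<eta>1 s" using exists_in_01[OF p0 p1 ne] by blast
  have cf: "continuous_on (cbox 0 1) (\<lambda>s. (norm (w s))\<^sup>2)"
    unfolding cbox_interval by (intro continuous_intros cw)
  have "integral {0..1} (\<lambda>s. (norm (w s))\<^sup>2) \<noteq> 0"
  proof
    assume z: "integral {0..1} (\<lambda>s. (norm (w s))\<^sup>2) = 0"
    have "integral (cbox 0 1) (\<lambda>s. (norm (w s))\<^sup>2) = 0 \<longleftrightarrow> (\<forall>x \<in> cbox 0 1. (norm (w x))\<^sup>2 = 0)"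
      by (rule integral_cbox_eq_0_iff[OF cf]) auto
    then have "(norm (w s))\<^sup>2 = 0" using z s(1) by (simp add: cbox_interval)
    then show False using s(2) unfolding w_def by simp
  qed
  moreover have "0 \<le> integral {0..1} (\<lambda>s. (norm (w s))\<^sup>2)" by (rule integral_nonneg_any) simp
  ultimately have "\<psi>0 < \<psi>1" using diff by simp
  then have Glt: "\<psi>0 * sqrt \<bar>\<psi>0\<bar> < \<psi>1 * sqrt \<bar>\<psi>1\<bar>" by (rule G_strict)
  define \<delta> where "\<delta> = \<psi>1 * sqrt \<bar>\<psi>1\<bar> - \<psi>0 * sqrt \<bar>\<psi>0\<bar>"
  define K where "K = (3/2) * Wb * sqrt W1"
  have dp: "\<delta> > 0" unfolding \<delta>_def using Glt by simp
  have Kp: "K > 0" unfolding K_def using Wbp W1p by simp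
  have lb: "ereal (\<delta> / K) \<le> ereal (riem_length (fst p) (snd p))"
    if p: "p \<in> {(\<gamma>, \<gamma>'). C1_path_A \<gamma> \<gamma>' \<and> \<gamma> 0 = \<eta>0 \<and> \<gamma> 1 = \<eta>1}" for p
  proof -
    obtain \<gamma> \<gamma>' where pe: "p = (\<gamma>, \<gamma>')" by fastforce
    have P: "C1_path_A \<gamma> \<gamma>'" and g0: "\<gamma> 0 = \<eta>0" and g1: "\<gamma> 1 = \<eta>1" using p pe by auto
    have "\<bar>(\<lambda>x. x * sqrt \<bar>x\<bar>) (integral {0..1} (\<lambda>s. \<gamma> 1 s \<bullet> w s))
          - (\<lambda>x. x * sqrt \<bar>x\<bar>) (integral {0..1} (\<lambda>s. \<gamma> 0 s \<bullet> w s))\<bar>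
         \<le> ((3/2) * Wb * sqrt W1) * riem_length \<gamma> \<gamma>'"
      by (rule path_lb[OF P cw wb less_imp_le[OF Wbp] W1le])
    then have "\<bar>\<delta>\<bar> \<le> K * riem_length \<gamma> \<gamma>'"
      by (simp only: \<delta>_def K_def \<psi>0_def \<psi>1_def g0 g1)
    then have "\<delta> \<le> K * riem_length \<gamma> \<gamma>'" by simp
    then have "\<delta> / K \<le> riem_length \<gamma> \<gamma>'" using Kp by (simp add: pos_divide_le_eq mult.commute)
    then show ?thesis using pe by simp
  qed
  have "ereal (\<delta> / K) \<le> dist_A \<eta>0 \<eta>1" unfolding dist_A_def by (rule INF_greatest) (rule lb)
  moreover have "0 < ereal (\<delta> / K)" using dp Kp by simp
  ultimately show ?thesis by (rule less_le_trans[rotated])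
qed

end
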